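(* Let $G$ be a Carnot group, let $D_G$ be the dimension provided by the theorem that for every $0<\varepsilon<1/2$, $(G,d_G^{1-\varepsilon})$ embeds into $\mathbb{R}^{D_G}$ with distortion $O_G(\varepsilon^{-1/2})$. Let $\Gamma\subset G$ be a discrete subgroup such that $d_G(\gamma_1,\gamma_2)\ge 1$ for all distinct $\gamma_1,\gamma_2\in\Gamma$. For $R\ge 2$ let $B_\Gamma(0,R)=\{\gamma\in\Gamma: d_G(0,\gamma)<R\}$, where $0$ is the identity of $G$. Then $(B_\Gamma(0,R),d_G)$ admits an embedding into $\mathbb{R}^{D_G}$ with distortion $O_G(\log^{1/2}R)$.
   Context: A Carnot group $G$ is a connected, simply connected Lie group with stratified Lie algebra $\mathfrak g=V_1\oplus\cdots\oplus V_s$, $V_{r+1}=[V_1,V_r]$, $V_{s+1}=0$, with a norm on $V_1$; $d_G$ is the associated Carnot–Carathéodory distance (infimum of lengths of horizontal piecewise smooth curves). A map $f:(X,d_X)\to(Y,d_Y)$ has distortion at most $D$ if there is $C>0$ with $Cd_X(x_1,x_2)\le d_Y(f(x_1),f(x_2))\le CDd_X(x_1,x_2)$ for all $x_1,x_2$. *)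

theory Defs
  imports "HOL-Analysis.Analysis"
begin

fun Ck :: "nat \<Rightarrow> ('a::euclidean_space \<Rightarrow> 'b::real_normed_vector) \<Rightarrow> bool" where
  "Ck 0 f = continuous_on UNIV f"
| "Ck (Suc k) f = ((\<forall>x. f differentiable (at x)) \<and>
                   (\<forall>v. Ck k (\<lambda>x. frechet_derivative f (at x) v)))"

definition smooth_map :: "('a::euclidean_space \<Rightarrow> 'b::real_normed_vector) \<Rightarrow> bool" where
  "smooth_map f \<longleftrightarrow> (\<forall>k. Ck k f)"

definition group_law :: "('a::real_vector \<Rightarrow> 'a \<Rightarrow> 'a) \<Rightarrow> bool" where
  "group_law m \<longleftrightarrow> (\<forall>x y z. m (m x y) z = m x (m y z)) \<and> (\<forall>x. m x 0 = x \<and> m 0 x = x)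
     \<and> (\<forall>x. \<exists>y. m x y = 0 \<and> m y x = 0)"

text \<open>Second-order (bilinear) term of the group law at the identity and the Lie bracket
  of the Lie algebra (identified with the tangent space at 0).\<close>
definition bilin_term :: "('a::real_normed_vector \<Rightarrow> 'a \<Rightarrow> 'a) \<Rightarrow> 'a \<Rightarrow> 'a \<Rightarrow> 'a" where
  "bilin_term m v w = vector_derivative
      (\<lambda>s. vector_derivative (\<lambda>t. m (t *\<^sub>R v) (s *\<^sub>R w)) (at 0)) (at 0)"

definition lie_bracket :: "('a::real_normed_vector \<Rightarrow> 'a \<Rightarrow> 'a) \<Rightarrow> 'a \<Rightarrow> 'a \<Rightarrow> 'a" where
  "lie_bracket m v w = bilin_term m v w - bilin_term m w v"

definition stratified :: "('a::real_normed_vector \<Rightarrow> 'a \<Rightarrow> 'a) \<Rightarrow> (nat \<Rightarrow> 'a set) \<Rightarrow> nat \<Rightarrow> bool" where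
  "stratified m V s \<longleftrightarrow> s \<ge> 1 \<and> (\<forall>i\<in>{1..s}. subspace (V i))
     \<and> (\<forall>x. \<exists>!u. (\<forall>i. i \<notin> {1..s} \<longrightarrow> u i = 0) \<and> (\<forall>i\<in>{1..s}. u i \<in> V i)
                  \<and> x = (\<Sum>i=1..s. u i))
     \<and> (\<forall>r\<in>{1..<s}. V (Suc r) = span {lie_bracket m a b | a b. a \<in> V 1 \<and> b \<in> V r})
     \<and> (\<forall>a\<in>V 1. \<forall>b\<in>V s. lie_bracket m a b = 0)"

definition norm_on :: "'a::real_vector set \<Rightarrow> ('a \<Rightarrow> real) \<Rightarrow> bool" where
  "norm_on W N \<longleftrightarrow> (\<forall>x\<in>W. N x \<ge> 0 \<and> (N x = 0 \<longleftrightarrow> x = 0))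
     \<and> (\<forall>c. \<forall>x\<in>W. N (c *\<^sub>R x) = \<bar>c\<bar> * N x)
     \<and> (\<forall>x\<in>W. \<forall>y\<in>W. N (x + y) \<le> N x + N y)"

text \<open>Carnot group (in exponential-type coordinates on R^n, identity 0).\<close>
definition carnot :: "(real^'n \<Rightarrow> real^'n \<Rightarrow> real^'n) \<Rightarrow> (nat \<Rightarrow> (real^'n) set) \<Rightarrow> nat
                      \<Rightarrow> (real^'n \<Rightarrow> real) \<Rightarrow> bool" where
  "carnot m V s N \<longleftrightarrow> group_law m \<and> smooth_map (\<lambda>p. m (fst p) (snd p))
     \<and> stratified m V s \<and> norm_on (V 1) N"

definition dL :: "('a::real_normed_vector \<Rightarrow> 'a \<Rightarrow> 'a) \<Rightarrow> 'a \<Rightarrow> 'a \<Rightarrow> 'a" where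
  "dL m x v = vector_derivative (\<lambda>t. m x (t *\<^sub>R v)) (at 0)"

definition horizontal :: "('a::euclidean_space \<Rightarrow> 'a \<Rightarrow> 'a) \<Rightarrow> (nat \<Rightarrow> 'a set) \<Rightarrow> ('a \<Rightarrow> real)
     \<Rightarrow> (real \<Rightarrow> 'a) \<Rightarrow> (real \<Rightarrow> 'a) \<Rightarrow> bool" where
  "horizontal m V N \<gamma> h \<longleftrightarrow> \<gamma> piecewise_C1_differentiable_on {0..1}
     \<and> (\<exists>S. finite S \<and> (\<forall>t\<in>{0..1} - S. h t \<in> V 1
            \<and> (\<gamma> has_vector_derivative dL m (\<gamma> t) (h t)) (at t within {0..1})))
     \<and> (\<lambda>t. N (h t)) integrable_on {0..1}"

definition cc_dist :: "('a::euclidean_space \<Rightarrow> 'a \<Rightarrow> 'a) \<Rightarrow> (nat \<Rightarrow> 'a set) \<Rightarrow> ('a \<Rightarrow> real)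
     \<Rightarrow> 'a \<Rightarrow> 'a \<Rightarrow> real" where
  "cc_dist m V N x y = Inf {integral {0..1} (\<lambda>t. N (h t)) | \<gamma> h.
       horizontal m V N \<gamma> h \<and> \<gamma> 0 = x \<and> \<gamma> 1 = y}"

definition distortion_le :: "('a \<Rightarrow> 'a \<Rightarrow> real) \<Rightarrow> 'a set \<Rightarrow> ('b \<Rightarrow> 'b \<Rightarrow> real) \<Rightarrow> ('a \<Rightarrow> 'b)
     \<Rightarrow> real \<Rightarrow> bool" where
  "distortion_le dX A dY f Dst \<longleftrightarrow> (\<exists>C>0. \<forall>x1\<in>A. \<forall>x2\<in>A.
      C * dX x1 x2 \<le> dY (f x1) (f x2) \<and> dY (f x1) (f x2) \<le> C * Dst * dX x1 x2)"

definition discrete_subgroup :: "('a::topological_space \<Rightarrow> 'a \<Rightarrow> 'a) \<Rightarrow> 'a \<Rightarrow> 'a set \<Rightarrow> bool" where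
  "discrete_subgroup m e \<Gamma> \<longleftrightarrow> e \<in> \<Gamma> \<and> (\<forall>x\<in>\<Gamma>. \<forall>y\<in>\<Gamma>. m x y \<in> \<Gamma>)
     \<and> (\<forall>x\<in>\<Gamma>. \<exists>y\<in>\<Gamma>. m x y = e \<and> m y x = e)
     \<and> (\<forall>g\<in>\<Gamma>. \<exists>U. open U \<and> U \<inter> \<Gamma> = {g})"

end

theory Submission
  imports Defs "HOL-Analysis.Analysis"
begin

lemma e_range:
  assumes R: "(R::real) \<ge> 2"
  shows "0 < 1 / (4 * ln R) \<and> 1 / (4 * ln R) < 1/2"
proof -
  have ln2: "ln (2::real) > 1/2"
  proof -
    have "ln (4::real) > ln (exp 1)" using exp_le by (subst ln_less_cancel_iff) auto
    moreover have "ln (4::real) = 2 * ln 2"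
      using ln_realpow[of 2 2] by (simp add: power2_eq_square)
    ultimately show ?thesis by simp
  qed
  have lnR: "ln R > 1/2" using ln2 R
    by (smt (verit) ln_le_cancel_iff)
  thus ?thesis by (simp add: field_simps)
qed

lemma core_bound:
  fixes d :: "'a \<Rightarrow> 'a \<Rightarrow> real" and f :: "'a \<Rightarrow> 'b::metric_space"
  assumes C0: "C0 > 0" and K: "K > 0" and R: "R \<ge> 2"
    and e: "e = 1 / (4 * ln R)"
    and L: "\<And>a b. C0 * d a b powr (1 - e) \<le> dist (f a) (f b)"
    and U: "\<And>a b. dist (f a) (f b) \<le> C0 * (K * e powr (-1/2)) * d a b powr (1 - e)"
    and z: "z \<in> G"
    and sep: "\<And>x y. x \<in> G \<Longrightarrow> y \<in> G \<Longrightarrow> x \<noteq> y \<Longrightarrow> d x y \<ge> 1"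
  shows "\<exists>C>0. \<forall>x1\<in>{g\<in>G. d z g < R}. \<forall>x2\<in>{g\<in>G. d z g < R}.
      C * d x1 x2 \<le> dist (f x1) (f x2) \<and>
      dist (f x1) (f x2) \<le> C * (2 * K * exp (max 0 (ln (4*K)) + 1) * sqrt (ln R)) * d x1 x2"
proof -
  define Lc where "Lc = max 0 (ln (4*K))"
  define B where "B = exp (Lc + 1)"
  have B: "B > 0" by (simp add: B_def)
  have ln2: "ln (2::real) > 1/2"
  proof -
    have "ln (4::real) > ln (exp 1)" using exp_le by (subst ln_less_cancel_iff) auto
    moreover have "ln (4::real) = 2 * ln 2"
      using ln_realpow[of 2 2] by (simp add: power2_eq_square)
    ultimately show ?thesis by simp
  qed
  have lnR: "ln R > 1/2" using ln2 R
    by (smt (verit) ln_le_cancel_iff)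
  have e0: "e > 0" using lnR e by simp
  have e12: "e < 1/2"
  proof -
    have "4*e*(1/2) < 4*e * ln R" using mult_strict_left_mono[of "1/2" "ln R" "4*e"] lnR e0 by simp
    also have "4*e*ln R = 1" using e lnR by simp
    finally show ?thesis by simp
  qed
  have P: "e powr (-1/2) = 2 * sqrt (ln R)"
  proof -
    have "e powr (-1/2) = (4 * ln R) powr (1/2)"
      using e lnR by (simp add: powr_minus_divide powr_divide)
    also have "\<dots> = sqrt (4 * ln R)" using lnR by (simp add: powr_half_sqrt)
    also have "\<dots> = 2 * sqrt (ln R)" by (simp add: real_sqrt_mult)
    finally show ?thesis .
  qed
  define P where "P = K * e powr (-1/2)"
  have Pv: "P = 2 * K * sqrt (ln R)" using P P_def by simp
  have P0: "P > 0" using Pv K lnR by simp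
  have sqR: "sqrt (ln R) \<le> R"
  proof -
    have "ln R \<le> R" using R ln_le_minus_one[of R] by simp
    hence "sqrt (ln R) \<le> sqrt R" by simp
    also have "sqrt R \<le> R"
    proof -
      have "R \<le> R * R" using R by simp
      hence "sqrt R \<le> sqrt (R * R)" by (rule real_sqrt_le_mono)
      thus ?thesis using R by simp
    qed
    finally show ?thesis .
  qed
  have dzero: "d x x = 0" for x
  proof -
    have "C0 * d x x powr (1 - e) \<le> 0" using L[of x x] by simp
    hence "d x x powr (1 - e) \<le> 0" using C0 by (simp add: mult_le_0_iff)
    hence "d x x powr (1 - e) = 0" by (smt (verit) powr_ge_zero)
    thus ?thesis by simp
  qed
  have toz: "dist (f z) (f x) \<le> C0 * P * R" if "x \<in> G" "d z x < R" for x
  proof (cases "x = z")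
    case True then show ?thesis using C0 P0 R by simp
  next
    case False
    have d1: "d z x \<ge> 1" using sep[OF z that(1)] False by auto
    have "d z x powr (1 - e) \<le> d z x powr 1"
      using d1 e0 by (intro powr_mono) auto
    also have "\<dots> \<le> R" using d1 that(2) by simp
    finally have "d z x powr (1 - e) \<le> R" .
    then have "C0 * P * d z x powr (1 - e) \<le> C0 * P * R"
      using C0 P0 by simp
    then show ?thesis using U[of z x] P_def by simp
  qed
  show ?thesis
  proof (rule exI[of _ "C0 / B"], rule conjI)
    show "C0 / B > 0" using C0 B by simp
    show "\<forall>x1\<in>{g\<in>G. d z g < R}. \<forall>x2\<in>{g\<in>G. d z g < R}.
      C0 / B * d x1 x2 \<le> dist (f x1) (f x2) \<and>
      dist (f x1) (f x2) \<le> C0 / B * (2 * K * exp (max 0 (ln (4*K)) + 1) * sqrt (ln R)) * d x1 x2"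
    proof (intro ballI)
    fix x1 x2 assume x1: "x1 \<in> {g\<in>G. d z g < R}" and x2: "x2 \<in> {g\<in>G. d z g < R}"
    have cst: "C0 / B * (2 * K * exp (max 0 (ln (4*K)) + 1) * sqrt (ln R)) = C0 * P"
      using B by (simp add: Pv B_def Lc_def)
    show "C0 / B * d x1 x2 \<le> dist (f x1) (f x2) \<and>
      dist (f x1) (f x2) \<le> C0 / B * (2 * K * exp (max 0 (ln (4*K)) + 1) * sqrt (ln R)) * d x1 x2"
    proof (cases "x1 = x2")
      case True then show ?thesis by (simp add: dzero)
    next
      case False
      define t where "t = d x1 x2"
      have t1: "t \<ge> 1" using sep x1 x2 False t_def by auto
      have up: "dist (f x1) (f x2) \<le> C0 * P * t"
      proof -
        have "t powr (1 - e) \<le> t powr 1" using t1 e0 by (intro powr_mono) auto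
        hence "C0 * P * t powr (1 - e) \<le> C0 * P * t" using C0 P0 t1 by simp
        thus ?thesis using U[of x1 x2] P_def t_def by simp
      qed
      have tri: "dist (f x1) (f x2) \<le> 2 * C0 * P * R"
        using dist_triangle3[of "f x1" "f x2" "f z"] toz[of x1] toz[of x2] x1 x2
        by (simp add: dist_commute)
      have "C0 * t powr (1 - e) \<le> 2 * C0 * P * R" using L[of x1 x2] tri t_def by simp
      hence tp: "t powr (1 - e) \<le> 2 * P * R" using C0 by simp
      have "2 * P * R \<le> 4 * K * R^2" using Pv sqR K R by (simp add: power2_eq_square)
      hence tp2: "t powr (1 - e) \<le> 4 * K * R^2" using tp by simp
      have "(1 - e) * ln t = ln (t powr (1 - e))" using t1 by (simp add: ln_powr)
      also have "\<dots> \<le> ln (4 * K * R^2)" 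
      proof -
        have "0 < t powr (1 - e)" using t1 by simp
        thus ?thesis using tp2 ln_le_cancel_iff[of "t powr (1 - e)" "4 * K * R^2"] by linarith
      qed
      also have "\<dots> = ln (4*K) + 2 * ln R" using K R by (simp add: ln_mult ln_realpow)
      finally have lt: "(1 - e) * ln t \<le> Lc + 2 * ln R" unfolding Lc_def by linarith
      have lt0: "ln t \<ge> 0" using t1 by simp
      have "ln t \<le> 2 * (Lc + 2 * ln R)"
      proof -
        have "(1/2) * ln t \<le> (1 - e) * ln t" using lt0 e12 by (intro mult_right_mono) auto
        hence "ln t \<le> 2 * ((1 - e) * ln t)" by simp
        also have "\<dots> \<le> 2 * (Lc + 2 * ln R)" using lt by simp
        finally show ?thesis .
      qed
      hence "e * ln t \<le> e * (2 * (Lc + 2 * ln R))" using e0 by simp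
      also have "\<dots> = Lc / (2 * ln R) + 1" using e lnR by (simp add: field_simps)
      also have "\<dots> \<le> Lc + 1"
      proof -
        have "Lc \<ge> 0" by (simp add: Lc_def)
        hence "Lc / (2 * ln R) \<le> Lc" using lnR by (simp add: field_simps)
          (metis less_eq_real_def mult.right_neutral mult_left_mono)
        thus ?thesis by simp
      qed
      finally have "e * ln t \<le> Lc + 1" .
      hence te: "t powr e \<le> B" unfolding B_def powr_def using t1 by (simp add: mult.commute)
      have tpe: "t powr e > 0" using t1 by simp
      have "t powr (1 - e) = t / t powr e" using t1 by (simp add: powr_diff)
      also have "\<dots> \<ge> t / B" using te tpe t1 by (simp add: frac_le)
      finally have "C0 / B * t \<le> C0 * t powr (1 - e)" using C0
        by (smt (verit) mult_left_mono times_divide_eq_left times_divide_eq_right)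
      then have lo: "C0 / B * t \<le> dist (f x1) (f x2)" using L[of x1 x2] t_def by simp
      show ?thesis using lo up cst t_def by simp
    qed
    qed
  qed
qed

theorem mainTheorem2:
  fixes m :: "real^'n \<Rightarrow> real^'n \<Rightarrow> real^'n" and V :: "nat \<Rightarrow> (real^'n) set"
    and s :: nat and N :: "real^'n \<Rightarrow> real"
  assumes G: "carnot m V s N"
    and snowflake: "\<exists>K>0. \<forall>\<epsilon>::real. 0 < \<epsilon> \<and> \<epsilon> < 1/2 \<longrightarrow>
        (\<exists>f :: real^'n \<Rightarrow> real^'d.
           distortion_le (\<lambda>x y. (cc_dist m V N x y) powr (1 - \<epsilon>)) UNIV dist f (K * \<epsilon> powr (-1/2)))"
  shows "\<exists>C>0. \<forall>\<Gamma> R::real.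
     discrete_subgroup m 0 \<Gamma>
     \<and> (\<forall>\<gamma>1\<in>\<Gamma>. \<forall>\<gamma>2\<in>\<Gamma>. \<gamma>1 \<noteq> \<gamma>2 \<longrightarrow> cc_dist m V N \<gamma>1 \<gamma>2 \<ge> 1)
     \<and> R \<ge> 2
     \<longrightarrow> (\<exists>f :: real^'n \<Rightarrow> real^'d.
           distortion_le (cc_dist m V N) {\<gamma>\<in>\<Gamma>. cc_dist m V N 0 \<gamma> < R} dist f (C * sqrt (ln R)))"
proof -
  obtain K where K: "K > 0" and KS: "\<forall>\<epsilon>::real. 0 < \<epsilon> \<and> \<epsilon> < 1/2 \<longrightarrow>
        (\<exists>f :: real^'n \<Rightarrow> real^'d.
           distortion_le (\<lambda>x y. (cc_dist m V N x y) powr (1 - \<epsilon>)) UNIV dist f (K * \<epsilon> powr (-1/2)))"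
    using snowflake by blast
  show ?thesis
  proof (rule exI[of _ "2 * K * exp (max 0 (ln (4*K)) + 1)"], rule conjI)
    show "2 * K * exp (max 0 (ln (4*K)) + 1) > 0" using K by simp
    show "\<forall>\<Gamma> R::real.
     discrete_subgroup m 0 \<Gamma>
     \<and> (\<forall>\<gamma>1\<in>\<Gamma>. \<forall>\<gamma>2\<in>\<Gamma>. \<gamma>1 \<noteq> \<gamma>2 \<longrightarrow> cc_dist m V N \<gamma>1 \<gamma>2 \<ge> 1)
     \<and> R \<ge> 2
     \<longrightarrow> (\<exists>f :: real^'n \<Rightarrow> real^'d.
           distortion_le (cc_dist m V N) {\<gamma>\<in>\<Gamma>. cc_dist m V N 0 \<gamma> < R} dist f
             (2 * K * exp (max 0 (ln (4*K)) + 1) * sqrt (ln R)))"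
    proof (intro allI impI)
      fix \<Gamma> and R :: real
      assume H: "discrete_subgroup m 0 \<Gamma>
     \<and> (\<forall>\<gamma>1\<in>\<Gamma>. \<forall>\<gamma>2\<in>\<Gamma>. \<gamma>1 \<noteq> \<gamma>2 \<longrightarrow> cc_dist m V N \<gamma>1 \<gamma>2 \<ge> 1)
     \<and> R \<ge> 2"
      define e where "e = 1 / (4 * ln R)"
      have R: "R \<ge> 2" using H by blast
      have er: "0 < e \<and> e < 1/2" using e_range[OF R] e_def by simp
      obtain f :: "real^'n \<Rightarrow> real^'d" where
        f: "distortion_le (\<lambda>x y. (cc_dist m V N x y) powr (1 - e)) UNIV dist f (K * e powr (-1/2))"
        using KS er by blast
      then obtain C0 where C0: "C0 > 0" and
        fb: "\<And>a b. C0 * cc_dist m V N a b powr (1 - e) \<le> dist (f a) (f b) \<and>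
              dist (f a) (f b) \<le> C0 * (K * e powr (-1/2)) * cc_dist m V N a b powr (1 - e)"
        unfolding distortion_le_def by blast
      have z: "0 \<in> \<Gamma>" using H unfolding discrete_subgroup_def by blast
      have sep: "\<And>x y. x \<in> \<Gamma> \<Longrightarrow> y \<in> \<Gamma> \<Longrightarrow> x \<noteq> y \<Longrightarrow> cc_dist m V N x y \<ge> 1"
        using H by blast
      from core_bound[OF C0 K R e_def, of "cc_dist m V N" f, OF conjunct1[OF fb] conjunct2[OF fb] z sep]
      show "\<exists>f :: real^'n \<Rightarrow> real^'d.
           distortion_le (cc_dist m V N) {\<gamma>\<in>\<Gamma>. cc_dist m V N 0 \<gamma> < R} dist f
             (2 * K * exp (max 0 (ln (4*K)) + 1) * sqrt (ln R))"
        unfolding distortion_le_def by blast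
    qed
  qed
qed

end
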